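(* (1) There exist a connected undirected unweighted graph $G=(V,E)$ and $\delta>0$ such that the set function $S\mapsto\operatorname{fp}(G^S,\delta)$ on subsets of $V$ is not submodular; moreover, such $G$ and $\delta$ exist also with the additional requirement that every node of $G$ has a self-loop. (2) There exists a connected undirected unweighted graph $G=(V,E)$ such that the set function $S\mapsto\operatorname{fp}^{\infty}(G^S)$ is not submodular.
   Context: Positional Voter model. A graph $G=(V,E,w)$ has node set $V$ with $|V|=n$, edge set $E\subseteq V\times V$ and weights $w\colon E\to\mathbb{R}_{>0}$; $\operatorname{in}(u)=\{v\in V:(v,u)\in E\}$. "Undirected unweighted" means $E$ is symmetric and $w\equiv 1$; "self-loop at $u$" means $(u,u)\in E$. A configuration is a set $X\subseteq V$ (the nodes carrying the novel trait $A$). Given a biased set $S\subseteq V$ and bias $\delta\ge 0$, define $f^S_X(v\mid u)=1+\delta$ if $v\in X$ and $u\in S$, and $1$ otherwise. The process $(\mathcal{X}_t)_{t\ge0}$: given $\mathcal{X}_t=X$, a node $u$ is chosen uniformly at random from $V$, then $v\in\operatorname{in}(u)$ is chosen with probability $\frac{f^S_X(v\mid u)\,w(v,u)}{\sum_{x\in\operatorname{in}(u)} f^S_X(x\mid u)\,w(x,u)}$, and $\mathcal{X}_{t+1}=X\cup\{u\}$ if $v\in X$, $\mathcal{X}_{t+1}=X\setminus\{u\}$ otherwise. Define $\operatorname{fp}(G^S,\delta,X)=\mathbb{P}[\exists t\ge0:\mathcal{X}_t=V\mid\mathcal{X}_0=X]$, $\operatorname{fp}(G^S,\delta)=\frac1n\sum_{u\in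 V}\operatorname{fp}(G^S,\delta,\{u\})$, and $\operatorname{fp}^{\infty}(G^S)=\lim_{\delta\to\infty}\operatorname{fp}(G^S,\delta)$. A set function $f$ on subsets of $V$ is submodular if $f(S_1)+f(S_2)\ge f(S_1\cup S_2)+f(S_1\cap S_2)$ for all $S_1,S_2\subseteq V$. *)

theory Defs
  imports "HOL-Analysis.Analysis"
begin

definition in_nbrs :: "('a \<times> 'a) set \<Rightarrow> 'a \<Rightarrow> 'a set" where
  "in_nbrs E u = {v. (v, u) \<in> E}"

definition fitness :: "'a set \<Rightarrow> real \<Rightarrow> 'a set \<Rightarrow> 'a \<Rightarrow> 'a \<Rightarrow> real" where
  "fitness S \<delta> X v u = (if v \<in> X \<and> u \<in> S then 1 + \<delta> else 1)"

definition copy_prob ::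
  "('a \<times> 'a) set \<Rightarrow> ('a \<times> 'a \<Rightarrow> real) \<Rightarrow> 'a set \<Rightarrow> real \<Rightarrow> 'a set \<Rightarrow> 'a \<Rightarrow> 'a \<Rightarrow> real" where
  "copy_prob E w S \<delta> X u v =
     fitness S \<delta> X v u * w (v, u) / (\<Sum>x\<in>in_nbrs E u. fitness S \<delta> X x u * w (x, u))"

definition next_conf :: "'a set \<Rightarrow> 'a \<Rightarrow> 'a \<Rightarrow> 'a set" where
  "next_conf X u v = (if v \<in> X then insert u X else X - {u})"

text \<open>hit_prob V E w S \<delta> t X = probability that the process started at X visits V
  within the first t steps, i.e. P[\<exists>s\<le>t. X_s = V | X_0 = X].\<close>
fun hit_prob ::
  "'a set \<Rightarrow> ('a \<times> 'a) set \<Rightarrow> ('a \<times> 'a \<Rightarrow> real) \<Rightarrow> 'a set \<Rightarrow> real \<Rightarrow> nat \<Rightarrow> 'a set \<Rightarrow> real" where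
  "hit_prob V E w S \<delta> 0 X = (if X = V then 1 else 0)"
| "hit_prob V E w S \<delta> (Suc t) X =
     (if X = V then 1
      else (\<Sum>u\<in>V. \<Sum>v\<in>in_nbrs E u.
              (1 / real (card V)) * copy_prob E w S \<delta> X u v
                * hit_prob V E w S \<delta> t (next_conf X u v)))"

text \<open>fp(G^S, \<delta>, X) = P[\<exists>t. X_t = V | X_0 = X], the limit of the (monotone)
  finite-horizon hitting probabilities (continuity of the probability measure).\<close>
definition fp_conf ::
  "'a set \<Rightarrow> ('a \<times> 'a) set \<Rightarrow> ('a \<times> 'a \<Rightarrow> real) \<Rightarrow> 'a set \<Rightarrow> real \<Rightarrow> 'a set \<Rightarrow> real" where
  "fp_conf V E w S \<delta> X = lim (\<lambda>t. hit_prob V E w S \<delta> t X)"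

definition fp ::
  "'a set \<Rightarrow> ('a \<times> 'a) set \<Rightarrow> ('a \<times> 'a \<Rightarrow> real) \<Rightarrow> 'a set \<Rightarrow> real \<Rightarrow> real" where
  "fp V E w S \<delta> = (1 / real (card V)) * (\<Sum>u\<in>V. fp_conf V E w S \<delta> {u})"

definition submodular_on :: "'a set \<Rightarrow> ('a set \<Rightarrow> real) \<Rightarrow> bool" where
  "submodular_on V f \<longleftrightarrow>
     (\<forall>S1 S2. S1 \<subseteq> V \<longrightarrow> S2 \<subseteq> V \<longrightarrow> f S1 + f S2 \<ge> f (S1 \<union> S2) + f (S1 \<inter> S2))"

definition undirected_connected_graph :: "'a set \<Rightarrow> ('a \<times> 'a) set \<Rightarrow> bool" where
  "undirected_connected_graph V E \<longleftrightarrow>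
     finite V \<and> V \<noteq> {} \<and> E \<subseteq> V \<times> V \<and> sym E \<and> (\<forall>u\<in>V. \<forall>v\<in>V. (u, v) \<in> E\<^sup>*)"

end

theory Submission
  imports Defs "HOL-Real_Asymp.Real_Asymp"
begin

definition Tf :: "'a set \<Rightarrow> ('a \<times> 'a) set \<Rightarrow> ('a \<times> 'a \<Rightarrow> real) \<Rightarrow> 'a set \<Rightarrow> real \<Rightarrow> ('a set \<Rightarrow> real) \<Rightarrow> 'a set \<Rightarrow> real" where
  "Tf V E w S \<delta> g X = (\<Sum>u\<in>V. \<Sum>v\<in>in_nbrs E u. (1 / real (card V)) * copy_prob E w S \<delta> X u v * g (next_conf X u v))"

lemma hit_V: "hit_prob V E w S \<delta> t V = 1"
  by (cases t) auto

lemma next_conf_empty: "next_conf {} u v = {}"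
  by (simp add: next_conf_def)

lemma hit_empty: "V \<noteq> {} \<Longrightarrow> hit_prob V E w S \<delta> t {} = 0"
  by (induction t) (auto simp: next_conf_empty)

lemma next_conf_sub: "X \<subseteq> V \<Longrightarrow> u \<in> V \<Longrightarrow> next_conf X u v \<subseteq> V"
  by (auto simp: next_conf_def)

lemma copy_prob_nonneg:
  assumes "\<delta> \<ge> 0" "\<And>e. w e \<ge> 0"
  shows "copy_prob E w S \<delta> X u v \<ge> 0"
proof -
  have f: "\<And>x. fitness S \<delta> X x u \<ge> 0" using assms(1) by (simp add: fitness_def)
  have "(\<Sum>x\<in>in_nbrs E u. fitness S \<delta> X x u * w (x, u)) \<ge> 0"
    by (intro sum_nonneg mult_nonneg_nonneg f assms(2))
  then show ?thesis unfolding copy_prob_def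
    by (intro divide_nonneg_nonneg mult_nonneg_nonneg f assms(2))
qed

lemma fp_conf_eq:
  fixes V :: "'a set" and h A :: "'a set \<Rightarrow> real" and c :: real
  assumes finV: "finite V" and neV: "V \<noteq> {}" and d0: "\<delta> \<ge> 0" and w0: "\<And>e. w e \<ge> 0"
    and hV: "h V = 1" and he: "h {} = 0"
    and hX0: "\<And>X. X \<subseteq> V \<Longrightarrow> X \<noteq> V \<Longrightarrow> X \<noteq> {} \<Longrightarrow> h X = Tf V E w S \<delta> h X"
    and A0: "\<And>Y. A Y \<ge> 0"
    and A1: "\<And>Y. Y \<subseteq> V \<Longrightarrow> Y \<noteq> V \<Longrightarrow> Y \<noteq> {} \<Longrightarrow> A Y \<ge> 1"
    and mass0: "\<And>X. X \<subseteq> V \<Longrightarrow> X \<noteq> V \<Longrightarrow> X \<noteq> {} \<Longrightarrow> Tf V E w S \<delta> A X \<le> 1 - c"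
    and c0: "c > 0" and c1: "c \<le> 1"
    and XV: "X \<subseteq> V"
  shows "fp_conf V E w S \<delta> X = h X"
proof -
  note hX = hX0[unfolded Tf_def]
  note mass = mass0[unfolded Tf_def]
  define K where "K = (\<Sum>Y\<in>Pow V. \<bar>h Y - hit_prob V E w S \<delta> 0 Y\<bar>)"
  have K0: "K \<ge> 0" unfolding K_def by (intro sum_nonneg) auto
  have bound: "\<forall>Y. Y \<subseteq> V \<longrightarrow> \<bar>h Y - hit_prob V E w S \<delta> t Y\<bar> \<le> K * (1 - c) ^ t" for t
  proof (induction t)
    case 0
    show ?case
    proof (intro allI impI)
      fix Y assume "Y \<subseteq> V"
      then have "Y \<in> Pow V" by simp
      then show "\<bar>h Y - hit_prob V E w S \<delta> 0 Y\<bar> \<le> K * (1 - c) ^ 0"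
        unfolding K_def using finV
          member_le_sum[of Y "Pow V" "\<lambda>Y. \<bar>h Y - hit_prob V E w S \<delta> 0 Y\<bar>"]
        by (simp del: hit_prob.simps)
    qed
  next
    case (Suc t)
    show ?case
    proof (intro allI impI)
      fix Y assume YV: "Y \<subseteq> V"
      show "\<bar>h Y - hit_prob V E w S \<delta> (Suc t) Y\<bar> \<le> K * (1 - c) ^ Suc t"
      proof (cases "Y = V \<or> Y = {}")
        case True
        then have "h Y = hit_prob V E w S \<delta> (Suc t) Y"
          using hV he hit_V[of V E w S \<delta> "Suc t"] hit_empty[OF neV, of E w S \<delta> "Suc t"]
          by (auto simp del: hit_prob.simps)
        moreover have "K * (1 - c) ^ Suc t \<ge> 0" using K0 c1 by simp
        ultimately show ?thesis by simp
      next
        case False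
        let ?p = "\<lambda>u v. (1 / real (card V)) * copy_prob E w S \<delta> Y u v"
        let ?Z = "\<lambda>u v. next_conf Y u v"
        let ?g = "hit_prob V E w S \<delta> t"
        have p0: "?p u v \<ge> 0" for u v using copy_prob_nonneg[where w=w, OF d0 w0, of E S Y u v] by simp
        have ptw: "\<bar>h (?Z u v) - ?g (?Z u v)\<bar> \<le> A (?Z u v) * (K * (1 - c) ^ t)" if "u \<in> V" for u v
        proof -
          have ZV: "?Z u v \<subseteq> V" using next_conf_sub[OF YV that] .
          show ?thesis
          proof (cases "?Z u v = V \<or> ?Z u v = {}")
            case True
            then have "\<bar>h (?Z u v) - ?g (?Z u v)\<bar> = 0"
              using hV he hit_V[of V E w S \<delta> t] hit_empty[OF neV, of E w S \<delta> t]
              by (auto simp del: hit_prob.simps)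
            moreover have "A (?Z u v) * (K * (1 - c) ^ t) \<ge> 0"
              using A0 K0 c1 by simp
            ultimately show ?thesis by simp
          next
            case False
            then have "A (?Z u v) \<ge> 1" using A1 ZV by auto
            moreover have "K * (1 - c) ^ t \<ge> 0" using K0 c1 by simp
            ultimately have "1 * (K * (1 - c) ^ t) \<le> A (?Z u v) * (K * (1 - c) ^ t)"
              by (intro mult_right_mono) auto
            moreover have "\<bar>h (?Z u v) - ?g (?Z u v)\<bar> \<le> K * (1 - c) ^ t"
              using Suc.IH ZV by blast
            ultimately show ?thesis by linarith
          qed
        qed
        have "h Y - hit_prob V E w S \<delta> (Suc t) Y =
              (\<Sum>u\<in>V. \<Sum>v\<in>in_nbrs E u. ?p u v * (h (?Z u v) - ?g (?Z u v)))"
        proof -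
          have e1: "hit_prob V E w S \<delta> (Suc t) Y = (\<Sum>u\<in>V. \<Sum>v\<in>in_nbrs E u. ?p u v * ?g (?Z u v))"
          proof -
            have "Y \<noteq> V" using False by blast
            then show ?thesis by (simp only: hit_prob.simps if_not_P if_False)
          qed
          have e2: "h Y = (\<Sum>u\<in>V. \<Sum>v\<in>in_nbrs E u. ?p u v * h (?Z u v))"
            using hX[OF YV] False by blast
          show ?thesis unfolding e1 e2
            by (simp only: right_diff_distrib sum_subtractf)
        qed
        also have "\<bar>\<dots>\<bar> \<le> (\<Sum>u\<in>V. \<Sum>v\<in>in_nbrs E u. \<bar>?p u v * (h (?Z u v) - ?g (?Z u v))\<bar>)"
          by (rule order_trans[OF sum_abs]) (intro sum_mono sum_abs)
        also have "\<dots> \<le> (\<Sum>u\<in>V. \<Sum>v\<in>in_nbrs E u. ?p u v * A (?Z u v) * (K * (1 - c) ^ t))"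
        proof (intro sum_mono)
          fix u v assume uV: "u \<in> V"
          have "\<bar>?p u v * (h (?Z u v) - ?g (?Z u v))\<bar> = ?p u v * \<bar>h (?Z u v) - ?g (?Z u v)\<bar>"
            by (subst abs_mult, subst abs_of_nonneg[OF p0], rule refl)
          also have "\<dots> \<le> ?p u v * (A (?Z u v) * (K * (1 - c) ^ t))"
            by (rule mult_left_mono[OF ptw[OF uV] p0])
          finally show "\<bar>?p u v * (h (?Z u v) - ?g (?Z u v))\<bar> \<le> ?p u v * A (?Z u v) * (K * (1 - c) ^ t)"
            by (simp only: mult.assoc)
        qed
        also have "\<dots> = (\<Sum>u\<in>V. \<Sum>v\<in>in_nbrs E u. ?p u v * A (?Z u v)) * (K * (1 - c) ^ t)"
          by (simp add: sum_distrib_right)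
        also have "\<dots> \<le> (1 - c) * (K * (1 - c) ^ t)"
          using mass[OF YV] False K0 c1 by (intro mult_right_mono) auto
        also have "\<dots> = K * (1 - c) ^ Suc t" by simp
        finally show ?thesis .
      qed
    qed
  qed
  have "(\<lambda>t. K * (1 - c) ^ t) \<longlonglongrightarrow> K * 0"
    using c0 c1 by (intro tendsto_mult tendsto_const LIMSEQ_power_zero) auto
  then have z: "(\<lambda>t. K * (1 - c) ^ t) \<longlonglongrightarrow> 0" by simp
  have "(\<lambda>t. h X - hit_prob V E w S \<delta> t X) \<longlonglongrightarrow> 0"
  proof (rule Lim_null_comparison[OF _ z], rule always_eventually, rule allI)
    fix t
    have "\<bar>h X - hit_prob V E w S \<delta> t X\<bar> \<le> K * (1 - c) ^ t" using bound XV by blast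
    then show "norm (h X - hit_prob V E w S \<delta> t X) \<le> K * (1 - c) ^ t" by (simp only: real_norm_def)
  qed
  then have "(\<lambda>t. h X - (h X - hit_prob V E w S \<delta> t X)) \<longlonglongrightarrow> h X - 0"
    by (intro tendsto_diff tendsto_const)
  then have "(\<lambda>t. hit_prob V E w S \<delta> t X) \<longlonglongrightarrow> h X"
    by (simp del: hit_prob.simps)
  then show ?thesis unfolding fp_conf_def by (rule limI)
qed


definition E3 :: "(nat \<times> nat) set" where "E3 = {(0,1),(1,0),(0,2),(2,0),(1,2),(2,1)}"
definition E3L :: "(nat \<times> nat) set" where "E3L = E3 \<union> {(0,0),(1,1),(2,2)}"

lemma in3: "in_nbrs E3 0 = {1,2}" "in_nbrs E3 1 = {0,2}" "in_nbrs E3 2 = {0,1}"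
  by (auto simp: in_nbrs_def E3_def)
lemma in3L: "in_nbrs E3L 0 = {0,1,2}" "in_nbrs E3L 1 = {0,1,2}" "in_nbrs E3L 2 = {0,1,2}"
  by (auto simp: in_nbrs_def E3L_def E3_def)

lemma sum3: "(\<Sum>u\<in>{0,1,2::nat}. f u) = f 0 + f 1 + f 2" by (simp add: add.assoc)
lemma sum2: "(\<Sum>u\<in>{1,2::nat}. f u) = f 1 + f 2" "(\<Sum>u\<in>{0,2::nat}. f u) = f 0 + f 2"
  "(\<Sum>u\<in>{0,1::nat}. f u) = f 0 + f 1" by simp_all
lemma card3: "card {0,1,2::nat} = 3" by simp

lemma linp:
  "0 \<le> d \<Longrightarrow> 0 < a \<Longrightarrow> 0 \<le> b \<Longrightarrow> (a + d * b :: real) \<noteq> 0"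
  "0 \<le> d \<Longrightarrow> 0 < a \<Longrightarrow> (a + d :: real) \<noteq> 0"
  "0 \<le> d \<Longrightarrow> 0 < a \<Longrightarrow> 0 \<le> b \<Longrightarrow> 0 < (a + d * b :: real)"
  "0 \<le> d \<Longrightarrow> 0 < a \<Longrightarrow> 0 < (a + d :: real)"
  by (smt (verit) mult_nonneg_nonneg)+

lemma pos_neq: "0 < (x::real) \<Longrightarrow> x \<noteq> 0" by simp

lemmas pp = mult_nonneg_nonneg add_pos_nonneg add_nonneg_pos add_nonneg_nonneg zero_le_power pos_neq

definition A3 :: "nat set \<Rightarrow> real" where
  "A3 Y = (if 0 \<in> Y \<and> 1 \<in> Y \<and> 2 \<in> Y then 0 else if 0 \<notin> Y \<and> 1 \<notin> Y \<and> 2 \<notin> Y then 0 else 1)"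

lemma sub3_cases: assumes "X \<subseteq> {0,1,2::nat}"
  shows "X = {} \<or> X = {0} \<or> X = {1} \<or> X = {2} \<or> X = {0,1} \<or> X = {0,2} \<or> X = {1,2} \<or> X = {0,1,2}"
proof -
  have "X \<in> Pow {0,1,2::nat}" using assms by simp
  then show ?thesis by (simp add: Pow_insert insert_commute)
qed

lemma A3_0: "A3 Y \<ge> 0" by (simp add: A3_def)
lemma A3_1: assumes "Y \<subseteq> {0,1,2}" "Y \<noteq> {0,1,2}" "Y \<noteq> {}" shows "A3 Y \<ge> 1"
  using sub3_cases[OF assms(1)] assms(2,3) by (auto simp: A3_def)

lemma E3_sub: "E3 \<subseteq> {0,1,2} \<times> {0,1,2}" by (auto simp: E3_def)
lemma E3L_sub: "E3L \<subseteq> {0,1,2} \<times> {0,1,2}" by (auto simp: E3L_def E3_def)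

lemma fp_conf_V3:
  fixes h :: "nat set \<Rightarrow> real"
  assumes d0: "0 \<le> d" and EV: "E \<subseteq> {0,1,2} \<times> {0,1,2}"
    and hV: "h {0,1,2} = 1" and he: "h {} = 0"
    and h1: "h {0} = Tf {0,1,2} E (\<lambda>_. 1) S d h {0}"
    and h2: "h {1} = Tf {0,1,2} E (\<lambda>_. 1) S d h {1}"
    and h3: "h {2} = Tf {0,1,2} E (\<lambda>_. 1) S d h {2}"
    and h4: "h {0,1} = Tf {0,1,2} E (\<lambda>_. 1) S d h {0,1}"
    and h5: "h {0,2} = Tf {0,1,2} E (\<lambda>_. 1) S d h {0,2}"
    and h6: "h {1,2} = Tf {0,1,2} E (\<lambda>_. 1) S d h {1,2}"
    and m1: "Tf {0,1,2} E (\<lambda>_. 1) S d A3 {0} \<le> 1 - c"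
    and m2: "Tf {0,1,2} E (\<lambda>_. 1) S d A3 {1} \<le> 1 - c"
    and m3: "Tf {0,1,2} E (\<lambda>_. 1) S d A3 {2} \<le> 1 - c"
    and m4: "Tf {0,1,2} E (\<lambda>_. 1) S d A3 {0,1} \<le> 1 - c"
    and m5: "Tf {0,1,2} E (\<lambda>_. 1) S d A3 {0,2} \<le> 1 - c"
    and m6: "Tf {0,1,2} E (\<lambda>_. 1) S d A3 {1,2} \<le> 1 - c"
    and c0: "0 < c" and c1: "c \<le> 1"
    and XV: "X \<subseteq> {0,1,2}"
  shows "fp_conf {0,1,2} E (\<lambda>_. 1) S d X = h X"
proof (rule fp_conf_eq[where A=A3 and c=c])
  show "h {0,1,2} = 1" by (rule hV)
  show "h {} = 0" by (rule he)
  show "0 \<le> d" by (rule d0)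
  show "0 < c" "c \<le> 1" by (rule c0, rule c1)
  show "X \<subseteq> {0,1,2}" by (rule XV)
  show "finite {0,1,2::nat}" "{0,1,2::nat} \<noteq> {}" by simp_all
  show "\<And>e. (0::real) \<le> 1" by simp
  show "\<And>Y. 0 \<le> A3 Y" by (rule A3_0)
  show "\<And>Y. Y \<subseteq> {0,1,2} \<Longrightarrow> Y \<noteq> {0,1,2} \<Longrightarrow> Y \<noteq> {} \<Longrightarrow> 1 \<le> A3 Y" by (rule A3_1)
  fix Y :: "nat set" assume a: "Y \<subseteq> {0,1,2}" "Y \<noteq> {0,1,2}" "Y \<noteq> {}"
  then have c: "Y = {0} \<or> Y = {1} \<or> Y = {2} \<or> Y = {0,1} \<or> Y = {0,2} \<or> Y = {1,2}"
    using sub3_cases[OF a(1)] by blast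
  show "h Y = Tf {0,1,2} E (\<lambda>_. 1) S d h Y"
    using c h1 h2 h3 h4 h5 h6 by blast
  show "Tf {0,1,2} E (\<lambda>_. 1) S d A3 Y \<le> 1 - c"
    using c m1 m2 m3 m4 m5 m6 by blast
qed

lemma sub_single: "{0} \<subseteq> {0,1,2::nat}" "{1} \<subseteq> {0,1,2::nat}" "{2} \<subseteq> {0,1,2::nat}" by simp_all

lemma fp_V3: "fp {0,1,2::nat} E w S d = (fp_conf {0,1,2} E w S d {0} + fp_conf {0,1,2} E w S d {1} + fp_conf {0,1,2} E w S d {2}) / 3"
  by (simp add: fp_def sum3 card3)


definition hN0 :: "real \<Rightarrow> nat set \<Rightarrow> real" where
  "hN0 d X = (if 0 \<in> X then (if 1 \<in> X then (if 2 \<in> X then (1) else ((2) / (3))) else (if 2 \<in> X then ((2) / (3)) else ((1) / (3)))) else (if 1 \<in> X then (if 2 \<in> X then ((2) / (3)) else ((1) / (3))) else (if 2 \<in> X then ((1) / (3)) else (0))))"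

lemma hN0_fpc: assumes d0: "0 \<le> (d::real)" and XV: "X \<subseteq> {0,1,2}"
  shows "fp_conf {0,1,2} E3 (\<lambda>_. 1) {} d X = hN0 d X"
  apply (rule fp_conf_V3[where c="1/3", OF d0 E3_sub])
  apply (simp_all only: Tf_def copy_prob_def sum3 in3 in3L card3 sum2 XV)
  apply (simp_all add: fitness_def next_conf_def hN0_def A3_def)
  apply ((simp_all add: algebra_simps)?)
  apply ((simp_all add: field_simps pp d0)?)
  apply (((algebra)+)?)
  done

lemma hN0_fp: assumes d0: "0 \<le> (d::real)"
  shows "fp {0,1,2} E3 (\<lambda>_. 1) {} d = ((1) / (3))"
  apply (simp only: fp_V3 hN0_fpc[OF d0] sub_single)
  apply (simp add: hN0_def)
  apply ((simp add: algebra_simps)?)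
  apply ((simp add: field_simps pp d0)?)
  apply (((algebra)+)?)
  done

definition hN1 :: "real \<Rightarrow> nat set \<Rightarrow> real" where
  "hN1 d X = (if 0 \<in> X then (if 1 \<in> X then (if 2 \<in> X then (1) else ((20 + 12*d) / (30 + 15*d))) else (if 2 \<in> X then ((20 + 12*d) / (30 + 15*d)) else ((10 + 6*d) / (30 + 15*d)))) else (if 1 \<in> X then (if 2 \<in> X then ((20 + 11*d) / (30 + 15*d)) else ((10 + 7*d) / (30 + 15*d))) else (if 2 \<in> X then ((10 + 7*d) / (30 + 15*d)) else (0))))"

lemma hN1_fpc: assumes d0: "0 \<le> (d::real)" and XV: "X \<subseteq> {0,1,2}"
  shows "fp_conf {0,1,2} E3 (\<lambda>_. 1) {0} d X = hN1 d X"
  apply (rule fp_conf_V3[where c="1/3", OF d0 E3_sub])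
  apply (simp_all only: Tf_def copy_prob_def sum3 in3 in3L card3 sum2 XV)
  apply (simp_all add: fitness_def next_conf_def hN1_def A3_def)
  apply ((simp_all add: algebra_simps)?)
  apply ((simp_all add: field_simps pp d0)?)
  apply (((algebra)+)?)
  done

lemma hN1_fp: assumes d0: "0 \<le> (d::real)"
  shows "fp {0,1,2} E3 (\<lambda>_. 1) {0} d = ((6 + 4*d) / (18 + 9*d))"
  apply (simp only: fp_V3 hN1_fpc[OF d0] sub_single)
  apply (simp add: hN1_def)
  apply ((simp add: algebra_simps)?)
  apply ((simp add: field_simps pp d0)?)
  apply (((algebra)+)?)
  done

definition hN2 :: "real \<Rightarrow> nat set \<Rightarrow> real" where
  "hN2 d X = (if 0 \<in> X then (if 1 \<in> X then (if 2 \<in> X then (1) else ((20 + 12*d) / (30 + 15*d))) else (if 2 \<in> X then ((20 + 11*d) / (30 + 15*d)) else ((10 + 7*d) / (30 + 15*d)))) else (if 1 \<in> X then (if 2 \<in> X then ((20 + 12*d) / (30 + 15*d)) else ((10 + 6*d) / (30 + 15*d))) else (if 2 \<in> X then ((10 + 7*d) / (30 + 15*d)) else (0))))"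

lemma hN2_fpc: assumes d0: "0 \<le> (d::real)" and XV: "X \<subseteq> {0,1,2}"
  shows "fp_conf {0,1,2} E3 (\<lambda>_. 1) {1} d X = hN2 d X"
  apply (rule fp_conf_V3[where c="1/3", OF d0 E3_sub])
  apply (simp_all only: Tf_def copy_prob_def sum3 in3 in3L card3 sum2 XV)
  apply (simp_all add: fitness_def next_conf_def hN2_def A3_def)
  apply ((simp_all add: algebra_simps)?)
  apply ((simp_all add: field_simps pp d0)?)
  apply (((algebra)+)?)
  done

lemma hN2_fp: assumes d0: "0 \<le> (d::real)"
  shows "fp {0,1,2} E3 (\<lambda>_. 1) {1} d = ((6 + 4*d) / (18 + 9*d))"
  apply (simp only: fp_V3 hN2_fpc[OF d0] sub_single)
  apply (simp add: hN2_def)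
  apply ((simp add: algebra_simps)?)
  apply ((simp add: field_simps pp d0)?)
  apply (((algebra)+)?)
  done

definition hN3 :: "real \<Rightarrow> nat set \<Rightarrow> real" where
  "hN3 d X = (if 0 \<in> X then (if 1 \<in> X then (if 2 \<in> X then (1) else ((20 + 24*d + 7*d^2) / (30 + 30*d + 7*d^2))) else (if 2 \<in> X then ((20 + 23*d + 6*d^2) / (30 + 30*d + 7*d^2)) else ((10 + 13*d + 4*d^2) / (30 + 30*d + 7*d^2)))) else (if 1 \<in> X then (if 2 \<in> X then ((20 + 23*d + 6*d^2) / (30 + 30*d + 7*d^2)) else ((10 + 13*d + 4*d^2) / (30 + 30*d + 7*d^2))) else (if 2 \<in> X then ((10 + 14*d + 4*d^2) / (30 + 30*d + 7*d^2)) else (0))))"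

lemma hN3_fpc: assumes d0: "0 \<le> (d::real)" and XV: "X \<subseteq> {0,1,2}"
  shows "fp_conf {0,1,2} E3 (\<lambda>_. 1) {0,1} d X = hN3 d X"
  apply (rule fp_conf_V3[where c="1/3", OF d0 E3_sub])
  apply (simp_all only: Tf_def copy_prob_def sum3 in3 in3L card3 sum2 XV)
  apply (simp_all add: fitness_def next_conf_def hN3_def A3_def)
  apply ((simp_all add: algebra_simps)?)
  apply ((simp_all add: field_simps pp d0)?)
  apply (((algebra)+)?)
  done

lemma hN3_fp: assumes d0: "0 \<le> (d::real)"
  shows "fp {0,1,2} E3 (\<lambda>_. 1) {0,1} d = ((30 + 40*d + 12*d^2) / (90 + 90*d + 21*d^2))"
  apply (simp only: fp_V3 hN3_fpc[OF d0] sub_single)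
  apply (simp add: hN3_def)
  apply ((simp add: algebra_simps)?)
  apply ((simp add: field_simps pp d0)?)
  apply (((algebra)+)?)
  done

definition hN4 :: "real \<Rightarrow> nat set \<Rightarrow> real" where
  "hN4 d X = (if 0 \<in> X then (if 1 \<in> X then (if 2 \<in> X then (1) else ((20 + 11*d) / (30 + 15*d))) else (if 2 \<in> X then ((20 + 12*d) / (30 + 15*d)) else ((10 + 7*d) / (30 + 15*d)))) else (if 1 \<in> X then (if 2 \<in> X then ((20 + 12*d) / (30 + 15*d)) else ((10 + 7*d) / (30 + 15*d))) else (if 2 \<in> X then ((10 + 6*d) / (30 + 15*d)) else (0))))"

lemma hN4_fpc: assumes d0: "0 \<le> (d::real)" and XV: "X \<subseteq> {0,1,2}"
  shows "fp_conf {0,1,2} E3 (\<lambda>_. 1) {2} d X = hN4 d X"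
  apply (rule fp_conf_V3[where c="1/3", OF d0 E3_sub])
  apply (simp_all only: Tf_def copy_prob_def sum3 in3 in3L card3 sum2 XV)
  apply (simp_all add: fitness_def next_conf_def hN4_def A3_def)
  apply ((simp_all add: algebra_simps)?)
  apply ((simp_all add: field_simps pp d0)?)
  apply (((algebra)+)?)
  done

lemma hN4_fp: assumes d0: "0 \<le> (d::real)"
  shows "fp {0,1,2} E3 (\<lambda>_. 1) {2} d = ((6 + 4*d) / (18 + 9*d))"
  apply (simp only: fp_V3 hN4_fpc[OF d0] sub_single)
  apply (simp add: hN4_def)
  apply ((simp add: algebra_simps)?)
  apply ((simp add: field_simps pp d0)?)
  apply (((algebra)+)?)
  done

definition hN5 :: "real \<Rightarrow> nat set \<Rightarrow> real" where
  "hN5 d X = (if 0 \<in> X then (if 1 \<in> X then (if 2 \<in> X then (1) else ((20 + 23*d + 6*d^2) / (30 + 30*d + 7*d^2))) else (if 2 \<in> X then ((20 + 24*d + 7*d^2) / (30 + 30*d + 7*d^2)) else ((10 + 13*d + 4*d^2) / (30 + 30*d + 7*d^2)))) else (if 1 \<in> X then (if 2 \<in> X then ((20 + 23*d + 6*d^2) / (30 + 30*d + 7*d^2)) else ((10 + 14*d + 4*d^2) / (30 + 30*d + 7*d^2))) else (if 2 \<in> X then ((10 + 13*d + 4*d^2) / (30 + 30*d + 7*d^2)) else (0))))"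

lemma hN5_fpc: assumes d0: "0 \<le> (d::real)" and XV: "X \<subseteq> {0,1,2}"
  shows "fp_conf {0,1,2} E3 (\<lambda>_. 1) {0,2} d X = hN5 d X"
  apply (rule fp_conf_V3[where c="1/3", OF d0 E3_sub])
  apply (simp_all only: Tf_def copy_prob_def sum3 in3 in3L card3 sum2 XV)
  apply (simp_all add: fitness_def next_conf_def hN5_def A3_def)
  apply ((simp_all add: algebra_simps)?)
  apply ((simp_all add: field_simps pp d0)?)
  apply (((algebra)+)?)
  done

lemma hN5_fp: assumes d0: "0 \<le> (d::real)"
  shows "fp {0,1,2} E3 (\<lambda>_. 1) {0,2} d = ((30 + 40*d + 12*d^2) / (90 + 90*d + 21*d^2))"
  apply (simp only: fp_V3 hN5_fpc[OF d0] sub_single)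
  apply (simp add: hN5_def)
  apply ((simp add: algebra_simps)?)
  apply ((simp add: field_simps pp d0)?)
  apply (((algebra)+)?)
  done

definition hN6 :: "real \<Rightarrow> nat set \<Rightarrow> real" where
  "hN6 d X = (if 0 \<in> X then (if 1 \<in> X then (if 2 \<in> X then (1) else ((20 + 23*d + 6*d^2) / (30 + 30*d + 7*d^2))) else (if 2 \<in> X then ((20 + 23*d + 6*d^2) / (30 + 30*d + 7*d^2)) else ((10 + 14*d + 4*d^2) / (30 + 30*d + 7*d^2)))) else (if 1 \<in> X then (if 2 \<in> X then ((20 + 24*d + 7*d^2) / (30 + 30*d + 7*d^2)) else ((10 + 13*d + 4*d^2) / (30 + 30*d + 7*d^2))) else (if 2 \<in> X then ((10 + 13*d + 4*d^2) / (30 + 30*d + 7*d^2)) else (0))))"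

lemma hN6_fpc: assumes d0: "0 \<le> (d::real)" and XV: "X \<subseteq> {0,1,2}"
  shows "fp_conf {0,1,2} E3 (\<lambda>_. 1) {1,2} d X = hN6 d X"
  apply (rule fp_conf_V3[where c="1/3", OF d0 E3_sub])
  apply (simp_all only: Tf_def copy_prob_def sum3 in3 in3L card3 sum2 XV)
  apply (simp_all add: fitness_def next_conf_def hN6_def A3_def)
  apply ((simp_all add: algebra_simps)?)
  apply ((simp_all add: field_simps pp d0)?)
  apply (((algebra)+)?)
  done

lemma hN6_fp: assumes d0: "0 \<le> (d::real)"
  shows "fp {0,1,2} E3 (\<lambda>_. 1) {1,2} d = ((30 + 40*d + 12*d^2) / (90 + 90*d + 21*d^2))"
  apply (simp only: fp_V3 hN6_fpc[OF d0] sub_single)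
  apply (simp add: hN6_def)
  apply ((simp add: algebra_simps)?)
  apply ((simp add: field_simps pp d0)?)
  apply (((algebra)+)?)
  done

definition hN7 :: "real \<Rightarrow> nat set \<Rightarrow> real" where
  "hN7 d X = (if 0 \<in> X then (if 1 \<in> X then (if 2 \<in> X then (1) else ((4 + 3*d) / (6 + 3*d))) else (if 2 \<in> X then ((4 + 3*d) / (6 + 3*d)) else ((2 + 2*d) / (6 + 3*d)))) else (if 1 \<in> X then (if 2 \<in> X then ((4 + 3*d) / (6 + 3*d)) else ((2 + 2*d) / (6 + 3*d))) else (if 2 \<in> X then ((2 + 2*d) / (6 + 3*d)) else (0))))"

lemma hN7_fpc: assumes d0: "0 \<le> (d::real)" and XV: "X \<subseteq> {0,1,2}"
  shows "fp_conf {0,1,2} E3 (\<lambda>_. 1) {0,1,2} d X = hN7 d X"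
  apply (rule fp_conf_V3[where c="1/3", OF d0 E3_sub])
  apply (simp_all only: Tf_def copy_prob_def sum3 in3 in3L card3 sum2 XV)
  apply (simp_all add: fitness_def next_conf_def hN7_def A3_def)
  apply ((simp_all add: algebra_simps)?)
  apply ((simp_all add: field_simps pp d0)?)
  apply (((algebra)+)?)
  done

lemma hN7_fp: assumes d0: "0 \<le> (d::real)"
  shows "fp {0,1,2} E3 (\<lambda>_. 1) {0,1,2} d = ((2 + 2*d) / (6 + 3*d))"
  apply (simp only: fp_V3 hN7_fpc[OF d0] sub_single)
  apply (simp add: hN7_def)
  apply ((simp add: algebra_simps)?)
  apply ((simp add: field_simps pp d0)?)
  apply (((algebra)+)?)
  done

definition hL0 :: "real \<Rightarrow> nat set \<Rightarrow> real" where
  "hL0 d X = (if 0 \<in> X then (if 1 \<in> X then (if 2 \<in> X then (1) else (2/3)) else (if 2 \<in> X then (2/3) else (1/3))) else (if 1 \<in> X then (if 2 \<in> X then (2/3) else (1/3)) else (if 2 \<in> X then (1/3) else (0))))"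

lemma hL0_fpc: assumes d0: "0 \<le> (1::real)" and XV: "X \<subseteq> {0,1,2}"
  shows "fp_conf {0,1,2} E3L (\<lambda>_. 1) {} 1 X = hL0 1 X"
  apply (rule fp_conf_V3[where c="1/6", OF d0 E3L_sub])
  apply (simp_all only: Tf_def copy_prob_def sum3 in3 in3L card3 sum2 XV)
  apply (simp_all add: fitness_def next_conf_def hL0_def A3_def)
  apply ((simp_all add: algebra_simps)?)
  apply ((simp_all add: field_simps pp d0)?)
  apply (((algebra)+)?)
  done

lemma hL0_fp: "fp {0,1,2} E3L (\<lambda>_. 1) {} 1 = (1/3)"
  apply (simp only: fp_V3 hL0_fpc[OF zero_le_one] sub_single)
  by (simp add: hL0_def)

definition hL1 :: "real \<Rightarrow> nat set \<Rightarrow> real" where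
  "hL1 d X = (if 0 \<in> X then (if 1 \<in> X then (if 2 \<in> X then (1) else (6482/8741)) else (if 2 \<in> X then (6482/8741) else (3704/8741))) else (if 1 \<in> X then (if 2 \<in> X then (6396/8741) else (3582/8741)) else (if 2 \<in> X then (3582/8741) else (0))))"

lemma hL1_fpc: assumes d0: "0 \<le> (1::real)" and XV: "X \<subseteq> {0,1,2}"
  shows "fp_conf {0,1,2} E3L (\<lambda>_. 1) {0} 1 X = hL1 1 X"
  apply (rule fp_conf_V3[where c="1/6", OF d0 E3L_sub])
  apply (simp_all only: Tf_def copy_prob_def sum3 in3 in3L card3 sum2 XV)
  apply (simp_all add: fitness_def next_conf_def hL1_def A3_def)
  apply ((simp_all add: algebra_simps)?)
  apply ((simp_all add: field_simps pp d0)?)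
  apply (((algebra)+)?)
  done

lemma hL1_fp: "fp {0,1,2} E3L (\<lambda>_. 1) {0} 1 = (10868/26223)"
  apply (simp only: fp_V3 hL1_fpc[OF zero_le_one] sub_single)
  by (simp add: hL1_def)

definition hL2 :: "real \<Rightarrow> nat set \<Rightarrow> real" where
  "hL2 d X = (if 0 \<in> X then (if 1 \<in> X then (if 2 \<in> X then (1) else (6482/8741)) else (if 2 \<in> X then (6396/8741) else (3582/8741))) else (if 1 \<in> X then (if 2 \<in> X then (6482/8741) else (3704/8741)) else (if 2 \<in> X then (3582/8741) else (0))))"

lemma hL2_fpc: assumes d0: "0 \<le> (1::real)" and XV: "X \<subseteq> {0,1,2}"
  shows "fp_conf {0,1,2} E3L (\<lambda>_. 1) {1} 1 X = hL2 1 X"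
  apply (rule fp_conf_V3[where c="1/6", OF d0 E3L_sub])
  apply (simp_all only: Tf_def copy_prob_def sum3 in3 in3L card3 sum2 XV)
  apply (simp_all add: fitness_def next_conf_def hL2_def A3_def)
  apply ((simp_all add: algebra_simps)?)
  apply ((simp_all add: field_simps pp d0)?)
  apply (((algebra)+)?)
  done

lemma hL2_fp: "fp {0,1,2} E3L (\<lambda>_. 1) {1} 1 = (10868/26223)"
  apply (simp only: fp_V3 hL2_fpc[OF zero_le_one] sub_single)
  by (simp add: hL2_def)

definition hL3 :: "real \<Rightarrow> nat set \<Rightarrow> real" where
  "hL3 d X = (if 0 \<in> X then (if 1 \<in> X then (if 2 \<in> X then (1) else (250/307)) else (if 2 \<in> X then (245/307) else (155/307))) else (if 1 \<in> X then (if 2 \<in> X then (245/307) else (155/307)) else (if 2 \<in> X then (147/307) else (0))))"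

lemma hL3_fpc: assumes d0: "0 \<le> (1::real)" and XV: "X \<subseteq> {0,1,2}"
  shows "fp_conf {0,1,2} E3L (\<lambda>_. 1) {0,1} 1 X = hL3 1 X"
  apply (rule fp_conf_V3[where c="1/6", OF d0 E3L_sub])
  apply (simp_all only: Tf_def copy_prob_def sum3 in3 in3L card3 sum2 XV)
  apply (simp_all add: fitness_def next_conf_def hL3_def A3_def)
  apply ((simp_all add: algebra_simps)?)
  apply ((simp_all add: field_simps pp d0)?)
  apply (((algebra)+)?)
  done

lemma hL3_fp: "fp {0,1,2} E3L (\<lambda>_. 1) {0,1} 1 = (457/921)"
  apply (simp only: fp_V3 hL3_fpc[OF zero_le_one] sub_single)
  by (simp add: hL3_def)

lemma graph_E3: "undirected_connected_graph {0,1,2} E3"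
  unfolding undirected_connected_graph_def
  by (auto simp: E3_def sym_def intro: r_into_rtrancl)

lemma graph_E3L: "undirected_connected_graph {0,1,2} E3L"
  unfolding undirected_connected_graph_def
  by (auto simp: E3L_def E3_def sym_def intro: r_into_rtrancl)

lemma loops_E3L: "\<forall>u\<in>{0,1,2::nat}. (u, u) \<in> E3L"
  by (simp add: E3L_def)

lemma set_e: "{0} \<union> {1} = {0,1::nat}" "{0} \<inter> {1} = ({}::nat set)" by auto
lemma set_s: "{0} \<subseteq> {0,1,2::nat}" "{1} \<subseteq> {0,1,2::nat}" by simp_all

lemma nsub_N: "\<not> submodular_on {0,1,2} (\<lambda>S. fp {0,1,2} E3 (\<lambda>_. 1) S 1)"
proof
  assume H: "submodular_on {0,1,2} (\<lambda>S. fp {0,1,2} E3 (\<lambda>_. 1) S 1)"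
  have "fp {0,1,2} E3 (\<lambda>_. 1) ({0} \<union> {1}) 1 + fp {0,1,2} E3 (\<lambda>_. 1) ({0} \<inter> {1}) 1
      \<le> fp {0,1,2} E3 (\<lambda>_. 1) {0} 1 + fp {0,1,2} E3 (\<lambda>_. 1) {1} 1"
    using H set_s unfolding submodular_on_def by blast
  then have "fp {0,1,2} E3 (\<lambda>_. 1) {0,1} 1 + fp {0,1,2} E3 (\<lambda>_. 1) {} 1
      \<le> fp {0,1,2} E3 (\<lambda>_. 1) {0} 1 + fp {0,1,2} E3 (\<lambda>_. 1) {1} 1"
    by (simp only: set_e)
  then show False unfolding hN0_fp[OF zero_le_one] hN1_fp[OF zero_le_one] hN2_fp[OF zero_le_one] hN3_fp[OF zero_le_one] by simp
qed

lemma nsub_L: "\<not> submodular_on {0,1,2} (\<lambda>S. fp {0,1,2} E3L (\<lambda>_. 1) S 1)"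
proof
  assume H: "submodular_on {0,1,2} (\<lambda>S. fp {0,1,2} E3L (\<lambda>_. 1) S 1)"
  have "fp {0,1,2} E3L (\<lambda>_. 1) ({0} \<union> {1}) 1 + fp {0,1,2} E3L (\<lambda>_. 1) ({0} \<inter> {1}) 1
      \<le> fp {0,1,2} E3L (\<lambda>_. 1) {0} 1 + fp {0,1,2} E3L (\<lambda>_. 1) {1} 1"
    using H set_s unfolding submodular_on_def by blast
  then have "fp {0,1,2} E3L (\<lambda>_. 1) {0,1} 1 + fp {0,1,2} E3L (\<lambda>_. 1) {} 1
      \<le> fp {0,1,2} E3L (\<lambda>_. 1) {0} 1 + fp {0,1,2} E3L (\<lambda>_. 1) {1} 1"
    by (simp only: set_e)
  then show False unfolding hL0_fp hL1_fp hL2_fp hL3_fp by simp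
qed

definition fpinf :: "nat set \<Rightarrow> real" where
  "fpinf S = (if card S = 0 then 1/3 else if card S = 1 then 4/9 else if card S = 2 then 4/7 else 2/3)"

lemma lim_0: "((\<lambda>d. fp {0,1,2} E3 (\<lambda>_. 1) {} d) \<longlongrightarrow> fpinf {}) at_top"
proof -
  have "((\<lambda>d::real. (((1) / (3))::real)) \<longlongrightarrow> ((1/3)::real)) at_top" by real_asymp
  moreover have "\<forall>\<^sub>F d in at_top. ((1) / (3)) = fp {0,1,2} E3 (\<lambda>_. 1) {} d"
    using eventually_ge_at_top[of "0::real"] by eventually_elim (erule hN0_fp[symmetric])
  ultimately have lim: "((\<lambda>d. fp {0,1,2} E3 (\<lambda>_. 1) {} d) \<longlongrightarrow> (1/3)) at_top"
    by (rule Lim_transform_eventually)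
  have e: "fpinf {} = (1/3)" by (simp add: fpinf_def)
  show ?thesis unfolding e by (rule lim)
qed

lemma lim_1: "((\<lambda>d. fp {0,1,2} E3 (\<lambda>_. 1) {0} d) \<longlongrightarrow> fpinf {0}) at_top"
proof -
  have "((\<lambda>d::real. (((6 + 4*d) / (18 + 9*d))::real)) \<longlongrightarrow> ((4/9)::real)) at_top" by real_asymp
  moreover have "\<forall>\<^sub>F d in at_top. ((6 + 4*d) / (18 + 9*d)) = fp {0,1,2} E3 (\<lambda>_. 1) {0} d"
    using eventually_ge_at_top[of "0::real"] by eventually_elim (erule hN1_fp[symmetric])
  ultimately have lim: "((\<lambda>d. fp {0,1,2} E3 (\<lambda>_. 1) {0} d) \<longlongrightarrow> (4/9)) at_top"
    by (rule Lim_transform_eventually)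
  have e: "fpinf {0} = (4/9)" by (simp add: fpinf_def)
  show ?thesis unfolding e by (rule lim)
qed

lemma lim_2: "((\<lambda>d. fp {0,1,2} E3 (\<lambda>_. 1) {1} d) \<longlongrightarrow> fpinf {1}) at_top"
proof -
  have "((\<lambda>d::real. (((6 + 4*d) / (18 + 9*d))::real)) \<longlongrightarrow> ((4/9)::real)) at_top" by real_asymp
  moreover have "\<forall>\<^sub>F d in at_top. ((6 + 4*d) / (18 + 9*d)) = fp {0,1,2} E3 (\<lambda>_. 1) {1} d"
    using eventually_ge_at_top[of "0::real"] by eventually_elim (erule hN2_fp[symmetric])
  ultimately have lim: "((\<lambda>d. fp {0,1,2} E3 (\<lambda>_. 1) {1} d) \<longlongrightarrow> (4/9)) at_top"
    by (rule Lim_transform_eventually)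
  have e: "fpinf {1} = (4/9)" by (simp add: fpinf_def)
  show ?thesis unfolding e by (rule lim)
qed

lemma lim_3: "((\<lambda>d. fp {0,1,2} E3 (\<lambda>_. 1) {0,1} d) \<longlongrightarrow> fpinf {0,1}) at_top"
proof -
  have "((\<lambda>d::real. (((30 + 40*d + 12*d^2) / (90 + 90*d + 21*d^2))::real)) \<longlongrightarrow> ((4/7)::real)) at_top" by real_asymp
  moreover have "\<forall>\<^sub>F d in at_top. ((30 + 40*d + 12*d^2) / (90 + 90*d + 21*d^2)) = fp {0,1,2} E3 (\<lambda>_. 1) {0,1} d"
    using eventually_ge_at_top[of "0::real"] by eventually_elim (erule hN3_fp[symmetric])
  ultimately have lim: "((\<lambda>d. fp {0,1,2} E3 (\<lambda>_. 1) {0,1} d) \<longlongrightarrow> (4/7)) at_top"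
    by (rule Lim_transform_eventually)
  have e: "fpinf {0,1} = (4/7)" by (simp add: fpinf_def)
  show ?thesis unfolding e by (rule lim)
qed

lemma lim_4: "((\<lambda>d. fp {0,1,2} E3 (\<lambda>_. 1) {2} d) \<longlongrightarrow> fpinf {2}) at_top"
proof -
  have "((\<lambda>d::real. (((6 + 4*d) / (18 + 9*d))::real)) \<longlongrightarrow> ((4/9)::real)) at_top" by real_asymp
  moreover have "\<forall>\<^sub>F d in at_top. ((6 + 4*d) / (18 + 9*d)) = fp {0,1,2} E3 (\<lambda>_. 1) {2} d"
    using eventually_ge_at_top[of "0::real"] by eventually_elim (erule hN4_fp[symmetric])
  ultimately have lim: "((\<lambda>d. fp {0,1,2} E3 (\<lambda>_. 1) {2} d) \<longlongrightarrow> (4/9)) at_top"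
    by (rule Lim_transform_eventually)
  have e: "fpinf {2} = (4/9)" by (simp add: fpinf_def)
  show ?thesis unfolding e by (rule lim)
qed

lemma lim_5: "((\<lambda>d. fp {0,1,2} E3 (\<lambda>_. 1) {0,2} d) \<longlongrightarrow> fpinf {0,2}) at_top"
proof -
  have "((\<lambda>d::real. (((30 + 40*d + 12*d^2) / (90 + 90*d + 21*d^2))::real)) \<longlongrightarrow> ((4/7)::real)) at_top" by real_asymp
  moreover have "\<forall>\<^sub>F d in at_top. ((30 + 40*d + 12*d^2) / (90 + 90*d + 21*d^2)) = fp {0,1,2} E3 (\<lambda>_. 1) {0,2} d"
    using eventually_ge_at_top[of "0::real"] by eventually_elim (erule hN5_fp[symmetric])
  ultimately have lim: "((\<lambda>d. fp {0,1,2} E3 (\<lambda>_. 1) {0,2} d) \<longlongrightarrow> (4/7)) at_top"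
    by (rule Lim_transform_eventually)
  have e: "fpinf {0,2} = (4/7)" by (simp add: fpinf_def)
  show ?thesis unfolding e by (rule lim)
qed

lemma lim_6: "((\<lambda>d. fp {0,1,2} E3 (\<lambda>_. 1) {1,2} d) \<longlongrightarrow> fpinf {1,2}) at_top"
proof -
  have "((\<lambda>d::real. (((30 + 40*d + 12*d^2) / (90 + 90*d + 21*d^2))::real)) \<longlongrightarrow> ((4/7)::real)) at_top" by real_asymp
  moreover have "\<forall>\<^sub>F d in at_top. ((30 + 40*d + 12*d^2) / (90 + 90*d + 21*d^2)) = fp {0,1,2} E3 (\<lambda>_. 1) {1,2} d"
    using eventually_ge_at_top[of "0::real"] by eventually_elim (erule hN6_fp[symmetric])
  ultimately have lim: "((\<lambda>d. fp {0,1,2} E3 (\<lambda>_. 1) {1,2} d) \<longlongrightarrow> (4/7)) at_top"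
    by (rule Lim_transform_eventually)
  have e: "fpinf {1,2} = (4/7)" by (simp add: fpinf_def)
  show ?thesis unfolding e by (rule lim)
qed

lemma lim_7: "((\<lambda>d. fp {0,1,2} E3 (\<lambda>_. 1) {0,1,2} d) \<longlongrightarrow> fpinf {0,1,2}) at_top"
proof -
  have "((\<lambda>d::real. (((2 + 2*d) / (6 + 3*d))::real)) \<longlongrightarrow> ((2/3)::real)) at_top" by real_asymp
  moreover have "\<forall>\<^sub>F d in at_top. ((2 + 2*d) / (6 + 3*d)) = fp {0,1,2} E3 (\<lambda>_. 1) {0,1,2} d"
    using eventually_ge_at_top[of "0::real"] by eventually_elim (erule hN7_fp[symmetric])
  ultimately have lim: "((\<lambda>d. fp {0,1,2} E3 (\<lambda>_. 1) {0,1,2} d) \<longlongrightarrow> (2/3)) at_top"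
    by (rule Lim_transform_eventually)
  have e: "fpinf {0,1,2} = (2/3)" by (simp add: fpinf_def)
  show ?thesis unfolding e by (rule lim)
qed

lemma lim_all: assumes "S \<subseteq> {0,1,2}"
  shows "((\<lambda>d. fp {0,1,2} E3 (\<lambda>_. 1) S d) \<longlongrightarrow> fpinf S) at_top"
  using sub3_cases[OF assms] by (elim disjE; simp only: lim_0 lim_1 lim_2 lim_3 lim_4 lim_5 lim_6 lim_7)

lemma nsub_inf: "\<not> submodular_on {0,1,2::nat} fpinf"
proof
  assume H: "submodular_on {0,1,2::nat} fpinf"
  have "fpinf ({0} \<union> {1}) + fpinf ({0} \<inter> {1}) \<le> fpinf {0} + fpinf {1}"
    using H set_s unfolding submodular_on_def by blast
  then have "fpinf {0,1} + fpinf {} \<le> fpinf {0} + fpinf {1}"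
    by (simp only: set_e)
  then show False by (simp add: fpinf_def)
qed

theorem theorem3:
  shows "((\<exists>(V :: nat set) E (\<delta> :: real). undirected_connected_graph V E \<and> \<delta> > 0 \<and>
            \<not> submodular_on V (\<lambda>S. fp V E (\<lambda>_. 1) S \<delta>))
        \<and> (\<exists>(V :: nat set) E (\<delta> :: real). undirected_connected_graph V E \<and> (\<forall>u\<in>V. (u, u) \<in> E)
            \<and> \<delta> > 0 \<and> \<not> submodular_on V (\<lambda>S. fp V E (\<lambda>_. 1) S \<delta>)))
       \<and> (\<exists>(V :: nat set) E (fpinf :: nat set \<Rightarrow> real). undirected_connected_graph V E \<and>
            (\<forall>S\<subseteq>V. ((\<lambda>\<delta>. fp V E (\<lambda>_. 1) S \<delta>) \<longlongrightarrow> fpinf S) at_top) \<and>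
            \<not> submodular_on V fpinf)"
proof -
  have A: "\<exists>(V :: nat set) E (\<delta> :: real). undirected_connected_graph V E \<and> \<delta> > 0 \<and>
            \<not> submodular_on V (\<lambda>S. fp V E (\<lambda>_. 1) S \<delta>)"
    using graph_E3 nsub_N zero_less_one by blast
  have B: "\<exists>(V :: nat set) E (\<delta> :: real). undirected_connected_graph V E \<and> (\<forall>u\<in>V. (u, u) \<in> E)
            \<and> \<delta> > 0 \<and> \<not> submodular_on V (\<lambda>S. fp V E (\<lambda>_. 1) S \<delta>)"
    using graph_E3L loops_E3L nsub_L zero_less_one by blast
  have C: "\<exists>(V :: nat set) E (f :: nat set \<Rightarrow> real). undirected_connected_graph V E \<and>
            (\<forall>S\<subseteq>V. ((\<lambda>\<delta>. fp V E (\<lambda>_. 1) S \<delta>) \<longlongrightarrow> f S) at_top) \<and>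
            \<not> submodular_on V f"
    using graph_E3 lim_all nsub_inf by blast
  show ?thesis using A B C by blast
qed

end
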